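(* Let $R$ be a System F type with $\mathrm{FV}(R)=\{X\}$ and $X\in^+ R$, and let $\gamma$ be any environment. Then for all terms $t,t'$: (i) $t\,\llbracket D_{\mathrm{ind}}\subseteq D_{\mathrm{param}}\rrbracket_\gamma\,t'$; (ii) if $R$ is $\forall^+$, then $t\,\llbracket D_{\mathrm{param}}\subseteq D_{\mathrm{ind}}\rrbracket_\gamma\,t'$; (iii) if $R$ is $\forall^+$, then $t\,\llbracket D_{\mathrm{ind}}\simeq D_{\mathrm{param}}\rrbracket_\gamma\,t'$.
   Context: Terms are those of the pure untyped $\lambda$-calculus, $t ::= x \mid \lambda x.t \mid t\,t'$, up to $\alpha$-equivalence; $=_{\beta\eta}$ is $\beta\eta$-convertibility. Relational types: $R ::= X \mid R\to R' \mid \forall X.R \mid R^{\cup} \mid R\cdot R' \mid t$ (the last is promotion of a term to a type); System F types are those built only from type variables, $\to$ and $\forall$. A relation $r$ on terms is $\beta\eta$-closed if $t_1\,r\,t_2$, $t_1'=_{\beta\eta}t_1$, $t_2'=_{\beta\eta}t_2$ imply $t_1'\,r\,t_2'$; $\mathcal{R}$ is the set of such relations. An environment $\gamma$ maps type variables to $\mathcal{R}$. Interpretation: $\llbracket X\rrbracket_\gamma=\gamma(X)$; $t\,\llbracket R\to R'\rrbracket_\gamma\,t'$ iff $a\,\llbracket R\rrbracket_\gamma\,a'$ implies $t\,a\,\llbracket R'\rrbracket_\gamma\,t'\,a'$ for all $a,a'$; $\llbracket \forall X.R\rrbracket_\gamma=\bigcap_{r\in\mathcal{R}}\llbracket R\rrbracket_{\gamma[X\mapsto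 r]}$; $t\,\llbracket R^\cup\rrbracket_\gamma\,t'$ iff $t'\,\llbracket R\rrbracket_\gamma\,t$; $t\,\llbracket R\cdot R'\rrbracket_\gamma\,t'$ iff $\exists t''$, $t\,\llbracket R\rrbracket_\gamma\,t''$ and $t''\,\llbracket R'\rrbracket_\gamma\,t'$; $\llbracket \hat t\rrbracket_\gamma=\{(t,t')\mid \hat t\,t=_{\beta\eta}t'\}$. Term abbreviations: $I:=\lambda x.x$, $K:=\lambda x.\lambda y.x$, $t\circ t':=\lambda x.t\,(t'\,x)$. Type abbreviations: $[t]R:=(K\,t)\cdot R$; $R[t]:=R\cdot (K\,t)^\cup$; $t\bullet R := t\cdot R\cdot t^\cup$; $R\subseteq R' := (K\,I)\bullet(R\to R')$; $R\Rightarrow R' := K\bullet (R\to R')$; $R\simeq R' := (R\subseteq R')\cdot(R'\subseteq R)$. Polarities $p\in\{+,-\}$, $\bar p$ the other. $X\in^p R$ is defined by: $X\in^+X$; $X\in^p Y$ for type variables $Y\neq X$; $X\in^p(R\to R')$ iff $X\in^{\bar p}R$ and $X\in^p R'$; $X\in^p\forall Y.R$ iff $X\in^p R$; $X\in^p (R\cdot R')$ iff $X\in^pR$ and $X\in^pR'$; $X\in^p R^\cup$ iff $X\in^p R$; $X\in^p t$ for promoted terms. The property $\forall^p$: type variables are $\forall^p$; if $R$ is $\forall^{\bar p}$ and $R'$ is $\forall^p$ then $R\to R'$ is $\forall^p$; if $R$ is $\forall^+$ then $\forall X.R$ is $\forall^+$; if $R$ is $\forall^p$ so is $R^\cup$;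 a promotion of $t=_{\beta\eta}I$ is $\forall^p$. For System F types define $\mathit{fmap}_{X,R}$ by recursion: $\mathit{fmap}_{X,X}=I$; $\mathit{fmap}_{X,Y}=K\,I$ ($Y\ne X$); $\mathit{fmap}_{X,R\to R'}=\lambda f.\lambda a.\,\mathit{fmap}_{X,R'}\,f\circ a\circ \mathit{fmap}_{X,R}\,f$; $\mathit{fmap}_{X,\forall Y.R}=\lambda f.\,\mathit{fmap}_{X,R}\,f$ (bound variable renamed to differ from $X$). Let $\mathit{fold}:=\lambda a.\lambda x.x\,a$ and $\mathit{in}_{X,R}:=\lambda x.\lambda a.\,a\,(\mathit{fmap}_{X,R}\,(\mathit{fold}\,a)\,x)$. Define $D_{\mathrm{param}}:=\forall X.(R\to X)\to X$ and $D_{\mathrm{ind}}:=\forall X.\big([\mathit{in}_{X,R}]\,(R\to X)\,[\mathit{in}_{X,R}]\big)\Rightarrow X$. *)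

theory Defs
  imports Main
begin

section \<open>Untyped lambda terms (de Bruijn indices, so alpha-equivalence is equality)\<close>

datatype dB = Var nat | App dB dB | Abs dB

primrec lift :: "dB \<Rightarrow> nat \<Rightarrow> dB" where
  "lift (Var i) k = (if i < k then Var i else Var (Suc i))"
| "lift (App s t) k = App (lift s k) (lift t k)"
| "lift (Abs s) k = Abs (lift s (Suc k))"

primrec subst :: "dB \<Rightarrow> dB \<Rightarrow> nat \<Rightarrow> dB" where
  "subst (Var i) s k = (if k < i then Var (i - 1) else if i = k then s else Var i)"
| "subst (App t u) s k = App (subst t s k) (subst u s k)"
| "subst (Abs t) s k = Abs (subst t (lift s 0) (Suc k))"

inductive beta_eta :: "dB \<Rightarrow> dB \<Rightarrow> bool" where
  beta: "beta_eta (App (Abs s) t) (subst s t 0)"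
| eta: "beta_eta (Abs (App (lift s 0) (Var 0))) s"
| appL: "beta_eta s t \<Longrightarrow> beta_eta (App s u) (App t u)"
| appR: "beta_eta s t \<Longrightarrow> beta_eta (App u s) (App u t)"
| abs: "beta_eta s t \<Longrightarrow> beta_eta (Abs s) (Abs t)"

definition conv :: "dB \<Rightarrow> dB \<Rightarrow> bool" where
  "conv = equivclp beta_eta"

definition be_closed :: "(dB \<Rightarrow> dB \<Rightarrow> bool) \<Rightarrow> bool" where
  "be_closed r \<longleftrightarrow> (\<forall>t1 t2 t1' t2'. r t1 t2 \<longrightarrow> conv t1' t1 \<longrightarrow> conv t2' t2 \<longrightarrow> r t1' t2')"

definition I_t :: dB where "I_t = Abs (Var 0)"
definition K_t :: dB where "K_t = Abs (Abs (Var 1))"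

definition comp_t :: "dB \<Rightarrow> dB \<Rightarrow> dB" where
  "comp_t t t' = Abs (App (lift t 0) (App (lift t' 0) (Var 0)))"

definition fold_t :: dB where "fold_t = Abs (Abs (App (Var 0) (Var 1)))"

type_synonym tyvar = nat

datatype rtype = TVar tyvar | Arr rtype rtype | All tyvar rtype | Conv rtype
  | Comp rtype rtype | Prom dB

primrec fv :: "rtype \<Rightarrow> tyvar set" where
  "fv (TVar Y) = {Y}"
| "fv (Arr R R') = fv R \<union> fv R'"
| "fv (All Y R) = fv R - {Y}"
| "fv (Conv R) = fv R"
| "fv (Comp R R') = fv R \<union> fv R'"
| "fv (Prom t) = {}"

primrec systemF :: "rtype \<Rightarrow> bool" where
  "systemF (TVar Y) = True"
| "systemF (Arr R R') = (systemF R \<and> systemF R')"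
| "systemF (All Y R) = systemF R"
| "systemF (Conv R) = False"
| "systemF (Comp R R') = False"
| "systemF (Prom t) = False"

primrec interp :: "(tyvar \<Rightarrow> dB \<Rightarrow> dB \<Rightarrow> bool) \<Rightarrow> rtype \<Rightarrow> dB \<Rightarrow> dB \<Rightarrow> bool" where
  "interp \<gamma> (TVar X) = \<gamma> X"
| "interp \<gamma> (Arr R R') = (\<lambda>t t'. \<forall>a a'. interp \<gamma> R a a' \<longrightarrow> interp \<gamma> R' (App t a) (App t' a'))"
| "interp \<gamma> (All X R) = (\<lambda>t t'. \<forall>r. be_closed r \<longrightarrow> interp (\<gamma>(X := r)) R t t')"
| "interp \<gamma> (Conv R) = (\<lambda>t t'. interp \<gamma> R t' t)"
| "interp \<gamma> (Comp R R') = (\<lambda>t t'. \<exists>t''. interp \<gamma> R t t'' \<and> interp \<gamma> R' t'' t')"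
| "interp \<gamma> (Prom u) = (\<lambda>t t'. conv (App u t) t')"

definition lbr :: "dB \<Rightarrow> rtype \<Rightarrow> rtype" where "lbr t R = Comp (Prom (App K_t t)) R"
definition rbr :: "rtype \<Rightarrow> dB \<Rightarrow> rtype" where "rbr R t = Comp R (Conv (Prom (App K_t t)))"
definition bullet :: "dB \<Rightarrow> rtype \<Rightarrow> rtype" where "bullet t R = Comp (Comp (Prom t) R) (Conv (Prom t))"
definition Sub :: "rtype \<Rightarrow> rtype \<Rightarrow> rtype" where "Sub R R' = bullet (App K_t I_t) (Arr R R')"
definition Imp :: "rtype \<Rightarrow> rtype \<Rightarrow> rtype" where "Imp R R' = bullet K_t (Arr R R')"
definition Simeq :: "rtype \<Rightarrow> rtype \<Rightarrow> rtype" where "Simeq R R' = Comp (Sub R R') (Sub R' R)"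

section \<open>Polarity and the forall^p property (polarity True = +, False = -)\<close>

text \<open>Types are taken up to alpha-equivalence: a bound variable equal to X is renamed
  away, so X occurs vacuously (with every polarity) under a binder for X.\<close>
primrec occ :: "bool \<Rightarrow> tyvar \<Rightarrow> rtype \<Rightarrow> bool" where
  "occ p X (TVar Y) = (Y \<noteq> X \<or> p)"
| "occ p X (Arr R R') = (occ (\<not> p) X R \<and> occ p X R')"
| "occ p X (All Y R) = (Y = X \<or> occ p X R)"
| "occ p X (Conv R) = occ p X R"
| "occ p X (Comp R R') = (occ p X R \<and> occ p X R')"
| "occ p X (Prom t) = True"

primrec forallp :: "bool \<Rightarrow> rtype \<Rightarrow> bool" where
  "forallp p (TVar Y) = True"
| "forallp p (Arr R R') = (forallp (\<not> p) R \<and> forallp p R')"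
| "forallp p (All Y R) = (p \<and> forallp True R)"
| "forallp p (Conv R) = forallp p R"
| "forallp p (Comp R R') = False"
| "forallp p (Prom t) = conv t I_t"

text \<open>fmapv P R: P says which type variables denote X (those not shadowed by a binder);
  the clause for \<forall>Y renames the bound Y apart from X, i.e. occurrences of Y no longer denote X.\<close>
primrec fmapv :: "(tyvar \<Rightarrow> bool) \<Rightarrow> rtype \<Rightarrow> dB" where
  "fmapv P (TVar Y) = (if P Y then I_t else App K_t I_t)"
| "fmapv P (Arr R R') =
     Abs (Abs (comp_t (App (lift (lift (fmapv P R') 0) 0) (Var 1))
                      (comp_t (Var 0) (App (lift (lift (fmapv P R) 0) 0) (Var 1)))))"
| "fmapv P (All Y R) = Abs (App (lift (fmapv (P(Y := False)) R) 0) (Var 0))"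
| "fmapv P (Conv R) = undefined"
| "fmapv P (Comp R R') = undefined"
| "fmapv P (Prom t) = undefined"

definition fmap :: "tyvar \<Rightarrow> rtype \<Rightarrow> dB" where
  "fmap X R = fmapv (\<lambda>Y. Y = X) R"

text \<open>in = \<lambda>x.\<lambda>a. a (fmap (fold a) x)\<close>
definition in_t :: "tyvar \<Rightarrow> rtype \<Rightarrow> dB" where
  "in_t X R = Abs (Abs (App (Var 0)
      (App (App (lift (lift (fmap X R) 0) 0) (App fold_t (Var 0))) (Var 1))))"

definition Dparam :: "tyvar \<Rightarrow> rtype \<Rightarrow> rtype" where
  "Dparam X R = All X (Arr (Arr R (TVar X)) (TVar X))"

definition Dind :: "tyvar \<Rightarrow> rtype \<Rightarrow> rtype" where
  "Dind X R = All X (Imp (rbr (lbr (in_t X R) (Arr R (TVar X))) (in_t X R)) (TVar X))"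

end

theory Submission
  imports Defs
begin


lemma lift_lift: "i < k + 1 \<Longrightarrow> lift (lift t i) (Suc k) = lift (lift t k) i"
  by (induct t arbitrary: i k) auto

lemma lift_subst [simp]: "j < i + 1 \<Longrightarrow> lift (subst t s j) i = subst (lift t (i + 1)) (lift s i) j"
  by (induct t arbitrary: i j s) (simp_all add: diff_Suc lift_lift split: nat.split)

lemma lift_subst_lt: "i < j + 1 \<Longrightarrow> lift (subst t s j) i = subst (lift t i) (lift s i) (j + 1)"
  by (induct t arbitrary: i j s) (auto simp: lift_lift)

lemma subst_lift [simp]: "subst (lift t k) s k = t"
  by (induct t arbitrary: k s) simp_all

lemma subst_subst: "i < j + 1 \<Longrightarrow> subst (subst t (lift v i) (Suc j)) (subst u v j) i = subst (subst t u i) v j"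
  by (induct t arbitrary: i j u v) (simp_all add: diff_Suc lift_lift [symmetric] lift_subst_lt split: nat.split)

lemma be_lift: "beta_eta s t \<Longrightarrow> beta_eta (lift s k) (lift t k)"
proof (induct arbitrary: k rule: beta_eta.induct)
  case (beta s t) thus ?case by (simp add: beta_eta.beta)
next
  case (eta s) thus ?case using beta_eta.eta[of "lift s k"] by (simp add: lift_lift)
qed (auto intro: beta_eta.intros)

lemma be_subst: "beta_eta s t \<Longrightarrow> beta_eta (subst s u k) (subst t u k)"
proof (induct arbitrary: u k rule: beta_eta.induct)
  case (beta s t) thus ?case using beta_eta.beta[of "subst s (lift u 0) (Suc k)" "subst t u k"]
    by (simp add: subst_subst[where i=0, simplified])
next
  case (eta s) thus ?case using beta_eta.eta[of "subst s u k"] by (simp add: lift_subst_lt[where i=0, simplified])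
qed (auto intro: beta_eta.intros)

lemma conv_map: assumes "\<And>x y. beta_eta x y \<Longrightarrow> beta_eta (f x) (f y)" and "conv x y"
  shows "conv (f x) (f y)"
  using assms(2) unfolding conv_def
proof (induct rule: equivclp_induct)
  case base thus ?case by simp
next
  case (step y z) thus ?case using assms(1) by (meson equivclp_into_equivclp)
qed

lemma conv_refl[simp]: "conv x x" by (simp add: conv_def)
lemma conv_sym: "conv x y \<Longrightarrow> conv y x" unfolding conv_def by (rule equivclp_sym)
lemma conv_trans [trans]: "conv x y \<Longrightarrow> conv y z \<Longrightarrow> conv x z" unfolding conv_def by (rule equivclp_trans)
lemma be_conv: "beta_eta x y \<Longrightarrow> conv x y" unfolding conv_def by blast

lemma conv_appL: "conv s t \<Longrightarrow> conv (App s u) (App t u)"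
  by (rule conv_map[where f="\<lambda>x. App x u"]) (auto intro: beta_eta.intros)
lemma conv_appR: "conv s t \<Longrightarrow> conv (App u s) (App u t)"
  by (rule conv_map[where f="\<lambda>x. App u x"]) (auto intro: beta_eta.intros)
lemma conv_app: "conv s t \<Longrightarrow> conv u v \<Longrightarrow> conv (App s u) (App t v)"
  by (meson conv_appL conv_appR conv_trans)
lemma conv_abs: "conv s t \<Longrightarrow> conv (Abs s) (Abs t)"
  by (rule conv_map[where f="Abs"]) (auto intro: beta_eta.intros)
lemma conv_lift: "conv s t \<Longrightarrow> conv (lift s k) (lift t k)"
  by (rule conv_map) (auto intro: be_lift)
lemma conv_subst: "conv s t \<Longrightarrow> conv (subst s u k) (subst t u k)"
  by (rule conv_map[where f="\<lambda>x. subst x u k"]) (auto intro: be_subst)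

primrec lvars :: "nat \<Rightarrow> dB \<Rightarrow> bool" where
  "lvars k (Var i) = (i < k)"
| "lvars k (App s t) = (lvars k s \<and> lvars k t)"
| "lvars k (Abs s) = lvars (Suc k) s"

lemma lift_closed: "lvars k t \<Longrightarrow> k \<le> j \<Longrightarrow> lift t j = t"
  by (induct t arbitrary: k j) auto
lemma subst_closed: "lvars k t \<Longrightarrow> k \<le> j \<Longrightarrow> subst t s j = t"
  by (induct t arbitrary: k j s) auto
lemma lvars_mono: "lvars k t \<Longrightarrow> k \<le> k' \<Longrightarrow> lvars k' t"
  by (induct t arbitrary: k k') auto
lemma lvars_ex: "\<exists>k. lvars k t"
proof (induct t)
  case (Var x) thus ?case by (rule exI[of _ "Suc x"]) simp
next
  case (App t1 t2)
  then obtain k1 k2 where "lvars k1 t1" "lvars k2 t2" by blast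
  thus ?case by (intro exI[of _ "max k1 k2"]) (auto intro: lvars_mono)
next
  case (Abs t) then obtain k where "lvars k t" by blast
  thus ?case by (intro exI[of _ k]) (auto intro: lvars_mono)
qed
lemma lvars_lift: "lvars k t \<Longrightarrow> lvars (Suc k) (lift t j)"
  by (induct t arbitrary: k j) auto

lemma conv_ext: assumes "\<And>x. conv (App h x) (App h' x)" shows "conv h h'"
proof -
  obtain k1 k2 where k: "lvars k1 h" "lvars k2 h'" using lvars_ex by blast
  define k where "k = max k1 k2"
  have l: "lvars k h" "lvars k h'" using k lvars_mono unfolding k_def by auto
  have "conv (lift (App h (Var k)) 0) (lift (App h' (Var k)) 0)" using assms conv_lift by blast
  hence "conv (subst (lift (App h (Var k)) 0) (Var 0) (Suc k)) (subst (lift (App h' (Var k)) 0) (Var 0) (Suc k))"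
    by (rule conv_subst)
  moreover have "subst (lift h 0) (Var 0) (Suc k) = lift h 0" "subst (lift h' 0) (Var 0) (Suc k) = lift h' 0"
    using l lvars_lift subst_closed by blast+
  ultimately have "conv (App (lift h 0) (Var 0)) (App (lift h' 0) (Var 0))" by simp
  hence "conv (Abs (App (lift h 0) (Var 0))) (Abs (App (lift h' 0) (Var 0)))" by (rule conv_abs)
  moreover have "conv h (Abs (App (lift h 0) (Var 0)))" "conv (Abs (App (lift h' 0) (Var 0))) h'"
    by (auto intro: be_conv conv_sym beta_eta.eta)
  ultimately show ?thesis by (meson conv_trans)
qed



lemma lvars_I[simp]: "lvars 0 I_t" and lvars_K[simp]: "lvars 0 K_t" and lvars_fold[simp]: "lvars 0 fold_t"
  by (simp_all add: I_t_def K_t_def fold_t_def)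

lemma closed_lift[simp]: "lvars 0 t \<Longrightarrow> lift t j = t" using lift_closed by blast
lemma closed_subst[simp]: "lvars 0 t \<Longrightarrow> subst t s j = t" using subst_closed by blast

lemma conv_beta: "conv (App (Abs s) t) (subst s t 0)" by (rule be_conv, rule beta_eta.beta)

lemma conv_I: "conv (App I_t u) u"
  using conv_beta[of "Var 0" u] by (simp add: I_t_def)

lemma conv_K: "conv (App (App K_t u) v) u"
proof -
  have "conv (App K_t u) (Abs (lift u 0))" using conv_beta[of "Abs (Var 1)" u] by (simp add: K_t_def)
  hence "conv (App (App K_t u) v) (App (Abs (lift u 0)) v)" by (rule conv_appL)
  also have "conv \<dots> u" using conv_beta[of "lift u 0" v] by simp
  finally show ?thesis .
qed

lemma conv_KI: "conv (App (App K_t I_t) u) I_t" by (rule conv_K)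
lemma conv_KIa: "conv (App (App (App K_t I_t) u) a) a"
  by (meson conv_KI conv_I conv_appL conv_trans)

lemma conv_fold: "conv (App (App fold_t f) x) (App x f)"
proof -
  have "conv (App fold_t f) (Abs (App (Var 0) (lift f 0)))" using conv_beta[of "Abs (App (Var 0) (Var 1))" f] by (simp add: fold_t_def)
  hence "conv (App (App fold_t f) x) (App (Abs (App (Var 0) (lift f 0))) x)" by (rule conv_appL)
  also have "conv \<dots> (App x f)" using conv_beta[of "App (Var 0) (lift f 0)" x] by simp
  finally show ?thesis .
qed

lemma be_closed_conv: "be_closed conv"
  unfolding be_closed_def by (meson conv_sym conv_trans)

lemma interp_closed: "(\<forall>Y. be_closed (\<gamma> Y)) \<Longrightarrow> be_closed (interp \<gamma> R)"
proof (induct R arbitrary: \<gamma>)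
  case (TVar x) thus ?case by simp
next
  case (Arr R1 R2)
  have c: "be_closed (interp \<gamma> R2)" using Arr by blast
  show ?case unfolding be_closed_def interp.simps
  proof (intro allI impI)
    fix t1 t2 t1' t2' a a'
    assume h: "\<forall>a a'. interp \<gamma> R1 a a' \<longrightarrow> interp \<gamma> R2 (App t1 a) (App t2 a')"
      and c1: "conv t1' t1" and c2: "conv t2' t2" and r: "interp \<gamma> R1 a a'"
    show "interp \<gamma> R2 (App t1' a) (App t2' a')"
      using c[unfolded be_closed_def, rule_format, OF h[rule_format, OF r] conv_appL[OF c1] conv_appL[OF c2]] .
  qed
next
  case (All Y R)
  have "\<And>r. be_closed r \<Longrightarrow> be_closed (interp (\<gamma>(Y := r)) R)" using All by auto
  thus ?case unfolding be_closed_def interp.simps by blast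
next
  case (Conv R)
  have c: "be_closed (interp \<gamma> R)" using Conv by blast
  thus ?case unfolding be_closed_def interp.simps by blast
next
  case (Comp R1 R2)
  have c1: "be_closed (interp \<gamma> R1)" and c2: "be_closed (interp \<gamma> R2)" using Comp by blast+
  show ?case unfolding be_closed_def interp.simps
  proof (intro allI impI)
    fix t1 t2 t1' t2'
    assume "\<exists>t''. interp \<gamma> R1 t1 t'' \<and> interp \<gamma> R2 t'' t2" and a: "conv t1' t1" "conv t2' t2"
    then obtain u where u: "interp \<gamma> R1 t1 u" "interp \<gamma> R2 u t2" by blast
    have "interp \<gamma> R1 t1' u" using c1[unfolded be_closed_def, rule_format, OF u(1) a(1) conv_refl] .
    moreover have "interp \<gamma> R2 u t2'" using c2[unfolded be_closed_def, rule_format, OF u(2) conv_refl a(2)] .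
    ultimately show "\<exists>t''. interp \<gamma> R1 t1' t'' \<and> interp \<gamma> R2 t'' t2'" by blast
  qed
next
  case (Prom u)
  show ?case unfolding be_closed_def interp.simps
  proof (intro allI impI)
    fix t1 t2 t1' t2'
    assume "conv (App u t1) t2" "conv t1' t1" "conv t2' t2"
    thus "conv (App u t1') t2'" by (meson conv_appR conv_sym conv_trans)
  qed
qed

lemma bcD: "be_closed r \<Longrightarrow> r t1 t2 \<Longrightarrow> conv t1' t1 \<Longrightarrow> conv t2' t2 \<Longrightarrow> r t1' t2'"
  unfolding be_closed_def by blast

lemma interp_Sub:
  assumes "\<forall>Y. be_closed (\<gamma> Y)"
  shows "interp \<gamma> (Sub A B) t t' \<longleftrightarrow> (\<forall>a a'. interp \<gamma> A a a' \<longrightarrow> interp \<gamma> B a a')"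
proof
  assume "interp \<gamma> (Sub A B) t t'"
  then obtain s t'' where s: "conv (App (App K_t I_t) t) s" "interp \<gamma> (Arr A B) s t''"
    "conv (App (App K_t I_t) t') t''"
    by (auto simp: Sub_def bullet_def)
  show "\<forall>a a'. interp \<gamma> A a a' \<longrightarrow> interp \<gamma> B a a'"
  proof (intro allI impI)
    fix a a' assume "interp \<gamma> A a a'"
    hence "interp \<gamma> B (App s a) (App t'' a')" using s by simp
    moreover have "conv a (App s a)" by (meson conv_KIa conv_appL conv_sym conv_trans s(1))
    moreover have "conv a' (App t'' a')" by (meson conv_KIa conv_appL conv_sym conv_trans s(3))
    ultimately show "interp \<gamma> B a a'" using bcD[OF interp_closed[OF assms]] by blast
  qed
next
  assume H: "\<forall>a a'. interp \<gamma> A a a' \<longrightarrow> interp \<gamma> B a a'"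
  have "interp \<gamma> (Arr A B) (App (App K_t I_t) t) (App (App K_t I_t) t')"
    unfolding interp.simps
  proof (intro allI impI)
    fix a a' assume "interp \<gamma> A a a'"
    thus "interp \<gamma> B (App (App (App K_t I_t) t) a) (App (App (App K_t I_t) t') a')"
      using H bcD[OF interp_closed[OF assms]] conv_KIa by blast
  qed
  thus "interp \<gamma> (Sub A B) t t'" unfolding Sub_def bullet_def interp.simps
    by (intro exI conjI) (rule conv_refl | assumption)+
qed

lemma interp_Imp:
  assumes "\<forall>Y. be_closed (\<gamma> Y)"
  shows "interp \<gamma> (Imp A B) t t' \<longleftrightarrow> ((\<exists>a a'. interp \<gamma> A a a') \<longrightarrow> interp \<gamma> B t t')"
proof
  assume "interp \<gamma> (Imp A B) t t'"
  then obtain s t'' where s: "conv (App K_t t) s" "interp \<gamma> (Arr A B) s t''"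
    "conv (App K_t t') t''"
    by (auto simp: Imp_def bullet_def)
  show "(\<exists>a a'. interp \<gamma> A a a') \<longrightarrow> interp \<gamma> B t t'"
  proof (intro impI, elim exE)
    fix a a' assume "interp \<gamma> A a a'"
    hence "interp \<gamma> B (App s a) (App t'' a')" using s by simp
    moreover have "conv t (App s a)" by (meson conv_K conv_appL conv_sym conv_trans s(1))
    moreover have "conv t' (App t'' a')" by (meson conv_K conv_appL conv_sym conv_trans s(3))
    ultimately show "interp \<gamma> B t t'" using bcD[OF interp_closed[OF assms]] by blast
  qed
next
  assume H: "(\<exists>a a'. interp \<gamma> A a a') \<longrightarrow> interp \<gamma> B t t'"
  have "interp \<gamma> (Arr A B) (App K_t t) (App K_t t')"
    unfolding interp.simps
  proof (intro allI impI)
    fix a a' assume "interp \<gamma> A a a'"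
    thus "interp \<gamma> B (App (App K_t t) a) (App (App K_t t') a')"
      using H bcD[OF interp_closed[OF assms]] conv_K by blast
  qed
  thus "interp \<gamma> (Imp A B) t t'" unfolding Imp_def bullet_def interp.simps
    by (intro exI conjI) (rule conv_refl | assumption)+
qed

lemma interp_brk:
  assumes "\<forall>Y. be_closed (\<gamma> Y)"
  shows "interp \<gamma> (rbr (lbr u B) u) a a' \<longleftrightarrow> interp \<gamma> B u u"
proof
  assume "interp \<gamma> (rbr (lbr u B) u) a a'"
  then obtain s t'' where s: "conv (App (App K_t u) a) s" "interp \<gamma> B s t''"
    "conv (App (App K_t u) a') t''"
    by (auto simp: rbr_def lbr_def)
  have "conv u s" "conv u t''" using s conv_K conv_sym conv_trans by blast+
  thus "interp \<gamma> B u u" using s(2) bcD[OF interp_closed[OF assms]] by blast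
next
  assume "interp \<gamma> B u u"
  hence "interp \<gamma> B (App (App K_t u) a) (App (App K_t u) a')"
    using bcD[OF interp_closed[OF assms]] conv_K by blast
  thus "interp \<gamma> (rbr (lbr u B) u) a a'" unfolding rbr_def lbr_def interp.simps
    by (intro exI conjI) (rule conv_refl | assumption)+
qed

lemma exconst: "(\<exists>(a::dB) (a'::dB). P) = P" by blast

lemma interp_Dind:
  assumes "\<forall>Y. be_closed (\<gamma> Y)"
  shows "interp \<gamma> (Dind X R) t t' \<longleftrightarrow>
    (\<forall>r. be_closed r \<longrightarrow> interp (\<gamma>(X:=r)) (Arr R (TVar X)) (in_t X R) (in_t X R) \<longrightarrow> r t t')"
proof -
  have c: "\<And>r. be_closed r \<Longrightarrow> \<forall>Y. be_closed ((\<gamma>(X:=r)) Y)" using assms by simp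
  have "\<And>r. be_closed r \<Longrightarrow> interp (\<gamma>(X:=r)) (Imp (rbr (lbr (in_t X R) (Arr R (TVar X))) (in_t X R)) (TVar X)) t t'
     \<longleftrightarrow> (interp (\<gamma>(X:=r)) (Arr R (TVar X)) (in_t X R) (in_t X R) \<longrightarrow> r t t')"
    by (simp only: interp_Imp[OF c] interp_brk[OF c] interp.simps(1) fun_upd_same exconst)
  thus ?thesis unfolding Dind_def interp.simps(3) by blast
qed

lemma interp_Dparam:
  "interp \<gamma> (Dparam X R) t t' \<longleftrightarrow>
    (\<forall>r. be_closed r \<longrightarrow> (\<forall>f f'. (\<forall>a a'. interp (\<gamma>(X:=r)) R a a' \<longrightarrow> r (App f a) (App f' a'))
       \<longrightarrow> r (App t f) (App t' f')))"
  unfolding Dparam_def by simp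



lemma lvars0: "lvars 0 t \<Longrightarrow> lvars k t" using lvars_mono by blast

lemma fmap_closed: "systemF R \<Longrightarrow> lvars 0 (fmapv P R)"
  by (induct R arbitrary: P) (auto simp: comp_t_def lvars0)

lemma ll0: "lift (lift t 0) 0 = lift (lift t 0) (Suc 0)" using lift_lift[of 0 0 t] by simp

lemma fmap_arr:
  assumes c1: "lvars 0 F1" and c2: "lvars 0 F2"
  shows "conv (App (App (App (Abs (Abs (comp_t (App (lift (lift F2 0) 0) (Var 1))
                      (comp_t (Var 0) (App (lift (lift F1 0) 0) (Var 1)))))) g) h) x)
              (App (App F2 g) (App h (App (App F1 g) x)))"
proof -
  let ?M = "Abs (Abs (Abs (App (App F2 (Var 2)) (App (Var 1) (App (App F1 (Var 2)) (Var 0))))))"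
  have "conv (App (Abs (App (Var 2) (App (App F1 (Var 3)) (Var 0)))) (Var 0)) (App (Var 1) (App (App F1 (Var 2)) (Var 0)))"
    using conv_beta[of "App (Var 2) (App (App F1 (Var 3)) (Var 0))" "Var 0"] c1 by (simp add: numeral_2_eq_2 numeral_3_eq_3)
  hence "conv (Abs (Abs (comp_t (App (lift (lift F2 0) 0) (Var 1))
                      (comp_t (Var 0) (App (lift (lift F1 0) 0) (Var 1)))))) ?M"
    using c1 c2 by (simp add: comp_t_def numeral_2_eq_2 numeral_3_eq_3) (intro conv_abs conv_appR)
  hence "conv (App (App (App (Abs (Abs (comp_t (App (lift (lift F2 0) 0) (Var 1))
                      (comp_t (Var 0) (App (lift (lift F1 0) 0) (Var 1)))))) g) h) x)
          (App (App (App ?M g) h) x)" by (intro conv_appL)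
  also have "conv (App ?M g) (Abs (Abs (App (App F2 (lift (lift g 0) 0)) (App (Var 1) (App (App F1 (lift (lift g 0) 0)) (Var 0))))))"
    using conv_beta[of "Abs (Abs (App (App F2 (Var 2)) (App (Var 1) (App (App F1 (Var 2)) (Var 0)))))" g] c1 c2 by simp
  hence "conv (App (App (App ?M g) h) x) (App (App (Abs (Abs (App (App F2 (lift (lift g 0) 0)) (App (Var 1) (App (App F1 (lift (lift g 0) 0)) (Var 0)))))) h) x)"
    by (intro conv_appL)
  also have "conv (App (Abs (Abs (App (App F2 (lift (lift g 0) 0)) (App (Var 1) (App (App F1 (lift (lift g 0) 0)) (Var 0)))))) h)
     (Abs (App (App F2 (lift g 0)) (App (lift h 0) (App (App F1 (lift g 0)) (Var 0)))))"
    using conv_beta[of "Abs (App (App F2 (lift (lift g 0) 0)) (App (Var 1) (App (App F1 (lift (lift g 0) 0)) (Var 0))))" h] c1 c2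
    by (simp add: ll0 del: lift_subst)
  hence "conv (App (App (Abs (Abs (App (App F2 (lift (lift g 0) 0)) (App (Var 1) (App (App F1 (lift (lift g 0) 0)) (Var 0)))))) h) x)
     (App (Abs (App (App F2 (lift g 0)) (App (lift h 0) (App (App F1 (lift g 0)) (Var 0))))) x)"
    by (intro conv_appL)
  also have "conv \<dots> (App (App F2 g) (App h (App (App F1 g) x)))"
    using conv_beta[of "App (App F2 (lift g 0)) (App (lift h 0) (App (App F1 (lift g 0)) (Var 0)))" x] c1 c2
    by (simp del: lift_subst)
  finally show ?thesis .
qed

lemma conv_in:
  assumes "systemF R"
  shows "conv (App (App (in_t X R) a) f) (App f (App (App (fmap X R) (App fold_t f)) a))"
proof -
  have c: "lvars 0 (fmap X R)" using fmap_closed[OF assms] by (simp add: fmap_def)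
  have "conv (App (in_t X R) a) (Abs (App (Var 0) (App (App (fmap X R) (App fold_t (Var 0))) (lift a 0))))"
    using conv_beta[of "Abs (App (Var 0) (App (App (fmap X R) (App fold_t (Var 0))) (Var 1)))" a] c
    by (simp add: in_t_def)
  hence "conv (App (App (in_t X R) a) f) (App (Abs (App (Var 0) (App (App (fmap X R) (App fold_t (Var 0))) (lift a 0)))) f)"
    by (rule conv_appL)
  also have "conv \<dots> (App f (App (App (fmap X R) (App fold_t f)) a))"
    using conv_beta[of "App (Var 0) (App (App (fmap X R) (App fold_t (Var 0))) (lift a 0))" f] c by simp
  finally show ?thesis .
qed

lemma fmap_all:
  assumes "lvars 0 F"
  shows "conv (App (Abs (App (lift F 0) (Var 0))) g) (App F g)"
  using conv_beta[of "App (lift F 0) (Var 0)" g] assms by simp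



definition relmap :: "(dB \<Rightarrow> dB \<Rightarrow> bool) \<Rightarrow> (dB \<Rightarrow> dB \<Rightarrow> bool) \<Rightarrow> dB \<Rightarrow> dB \<Rightarrow> bool" where
  "relmap A B u u' \<longleftrightarrow> (\<forall>a a'. A a a' \<longrightarrow> B (App u a) (App u' a'))"

lemma upd_P: "(\<lambda>Z. b \<and> Z = X)(Y := False) = (\<lambda>Z. (b \<and> Y \<noteq> X) \<and> Z = X)"
  by (rule ext) auto

lemma fmap_rel:
  "systemF R \<Longrightarrow> (\<forall>Y. be_closed (\<gamma>1 Y)) \<Longrightarrow> (\<forall>Y. be_closed (\<gamma>2 Y)) \<Longrightarrow>
   (\<forall>Y. Y \<noteq> X \<longrightarrow> \<gamma>1 Y = \<gamma>2 Y) \<Longrightarrow> (b \<longrightarrow> occ p X R) \<Longrightarrow>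
   (b \<longrightarrow> relmap (\<gamma>1 X) (\<gamma>2 X) g g') \<Longrightarrow> (\<not> b \<longrightarrow> \<gamma>1 X = \<gamma>2 X) \<Longrightarrow>
   relmap (interp (if p then \<gamma>1 else \<gamma>2) R) (interp (if p then \<gamma>2 else \<gamma>1) R)
     (App (fmapv (\<lambda>Z. b \<and> Z = X) R) g) (App (fmapv (\<lambda>Z. b \<and> Z = X) R) g')"
proof (induct R arbitrary: \<gamma>1 \<gamma>2 p b g g')
  case (TVar Y)
  show ?case
  proof (cases "b \<and> Y = X")
    case True
    hence p: p using TVar by simp
    have c: "be_closed (\<gamma>2 X)" using TVar by blast
    show ?thesis using True p TVar(6) unfolding relmap_def
      by simp (meson c bcD conv_I conv_appL)
  next
    case False
    hence e: "\<gamma>1 Y = \<gamma>2 Y" using TVar(4) TVar(7) by auto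
    have c: "be_closed (\<gamma>2 Y)" using TVar by blast
    show ?thesis using False e unfolding relmap_def
      by simp (meson c bcD conv_KIa)
  qed
next
  case (Arr R1 R2)
  let ?P = "\<lambda>Z. b \<and> Z = X"
  let ?ga = "if p then \<gamma>1 else \<gamma>2" and ?gb = "if p then \<gamma>2 else \<gamma>1"
  have s: "systemF R1" "systemF R2" using Arr by auto
  have c1: "lvars 0 (fmapv ?P R1)" and c2: "lvars 0 (fmapv ?P R2)" using fmap_closed s by blast+
  have IH1: "relmap (interp ?gb R1) (interp ?ga R1) (App (fmapv ?P R1) g) (App (fmapv ?P R1) g')"
    using Arr(1)[of \<gamma>1 \<gamma>2 b "\<not> p" g g'] Arr(3-9) by (auto split: if_splits)
  have IH2: "relmap (interp ?ga R2) (interp ?gb R2) (App (fmapv ?P R2) g) (App (fmapv ?P R2) g')"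
    using Arr(2)[of \<gamma>1 \<gamma>2 b p g g'] Arr(3-9) by (auto split: if_splits)
  have cb: "be_closed (interp ?gb R2)" using interp_closed Arr(4,5) by simp
  show ?case unfolding relmap_def interp.simps
  proof (intro allI impI)
    fix h h' x x'
    assume hh: "\<forall>a a'. interp ?ga R1 a a' \<longrightarrow> interp ?ga R2 (App h a) (App h' a')"
      and xx: "interp ?gb R1 x x'"
    have "interp ?ga R1 (App (App (fmapv ?P R1) g) x) (App (App (fmapv ?P R1) g') x')"
      using IH1 xx unfolding relmap_def by blast
    hence "interp ?ga R2 (App h (App (App (fmapv ?P R1) g) x)) (App h' (App (App (fmapv ?P R1) g') x'))"
      using hh by blast
    hence "interp ?gb R2 (App (App (fmapv ?P R2) g) (App h (App (App (fmapv ?P R1) g) x)))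
                         (App (App (fmapv ?P R2) g') (App h' (App (App (fmapv ?P R1) g') x')))"
      using IH2 unfolding relmap_def by blast
    thus "interp ?gb R2 (App (App (App (fmapv ?P (Arr R1 R2)) g) h) x) (App (App (App (fmapv ?P (Arr R1 R2)) g') h') x')"
      using bcD[OF cb] fmap_arr[OF c1 c2] by simp
  qed
next
  case (All Y R)
  let ?P = "\<lambda>Z. b \<and> Z = X"
  let ?b = "b \<and> Y \<noteq> X"
  let ?P' = "\<lambda>Z. ?b \<and> Z = X"
  let ?ga = "if p then \<gamma>1 else \<gamma>2" and ?gb = "if p then \<gamma>2 else \<gamma>1"
  have s: "systemF R" using All by auto
  have c: "lvars 0 (fmapv ?P' R)" using fmap_closed s by blast
  have fm: "fmapv ?P (All Y R) = Abs (App (lift (fmapv ?P' R) 0) (Var 0))"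
    by (simp add: upd_P)
  show ?case unfolding relmap_def
  proof (intro allI impI)
    fix a a' assume aa: "interp ?ga (All Y R) a a'"
    show "interp ?gb (All Y R) (App (App (fmapv ?P (All Y R)) g) a) (App (App (fmapv ?P (All Y R)) g') a')"
      unfolding interp.simps
    proof (intro allI impI)
      fix r assume r: "be_closed r"
      have IH: "relmap (interp (if p then \<gamma>1(Y:=r) else \<gamma>2(Y:=r)) R) (interp (if p then \<gamma>2(Y:=r) else \<gamma>1(Y:=r)) R)
          (App (fmapv ?P' R) g) (App (fmapv ?P' R) g')"
        using All(1)[of "\<gamma>1(Y:=r)" "\<gamma>2(Y:=r)" ?b p g g'] All(2-8) r by auto
      have e1: "(if p then \<gamma>1(Y:=r) else \<gamma>2(Y:=r)) = ?ga(Y:=r)" and e2: "(if p then \<gamma>2(Y:=r) else \<gamma>1(Y:=r)) = ?gb(Y:=r)"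
        by auto
      have "interp (?ga(Y:=r)) R a a'" using aa r by simp
      hence "interp (?gb(Y:=r)) R (App (App (fmapv ?P' R) g) a) (App (App (fmapv ?P' R) g') a')"
        using IH unfolding relmap_def e1 e2 by blast
      moreover have cb: "be_closed (interp (?gb(Y:=r)) R)" using interp_closed All(3,4) r by simp
      ultimately show "interp (?gb(Y:=r)) R (App (App (fmapv ?P (All Y R)) g) a) (App (App (fmapv ?P (All Y R)) g') a')"
        unfolding fm using bcD[OF cb] fmap_all[OF c] conv_appL by blast
    qed
  qed
qed auto



lemma IE:
  "systemF R \<Longrightarrow> (\<forall>Y. be_closed (\<gamma> Y)) \<Longrightarrow> (\<forall>Y\<in>fv R. \<gamma> Y = conv) \<Longrightarrow> forallp p R \<Longrightarrow>
   (p \<longrightarrow> interp \<gamma> R a a' \<longrightarrow> conv a a') \<and> (\<not> p \<longrightarrow> conv a a' \<longrightarrow> interp \<gamma> R a a')"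
proof (induct R arbitrary: \<gamma> p a a')
  case (TVar Y) thus ?case by simp
next
  case (Arr R1 R2)
  have IH1: "\<And>q x x'. forallp q R1 \<Longrightarrow> (q \<longrightarrow> interp \<gamma> R1 x x' \<longrightarrow> conv x x') \<and> (\<not> q \<longrightarrow> conv x x' \<longrightarrow> interp \<gamma> R1 x x')"
  proof -
    fix q x x' assume "forallp q R1"
    moreover have "systemF R1" using Arr(3) by simp
    moreover have "\<forall>Y\<in>fv R1. \<gamma> Y = conv" using Arr(5) by simp
    ultimately show "(q \<longrightarrow> interp \<gamma> R1 x x' \<longrightarrow> conv x x') \<and> (\<not> q \<longrightarrow> conv x x' \<longrightarrow> interp \<gamma> R1 x x')"
      using Arr(1)[of \<gamma> q x x'] Arr(4) by blast
  qed
  have IH2: "\<And>q x x'. forallp q R2 \<Longrightarrow> (q \<longrightarrow> interp \<gamma> R2 x x' \<longrightarrow> conv x x') \<and> (\<not> q \<longrightarrow> conv x x' \<longrightarrow> interp \<gamma> R2 x x')"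
  proof -
    fix q x x' assume "forallp q R2"
    moreover have "systemF R2" using Arr(3) by simp
    moreover have "\<forall>Y\<in>fv R2. \<gamma> Y = conv" using Arr(5) by simp
    ultimately show "(q \<longrightarrow> interp \<gamma> R2 x x' \<longrightarrow> conv x x') \<and> (\<not> q \<longrightarrow> conv x x' \<longrightarrow> interp \<gamma> R2 x x')"
      using Arr(2)[of \<gamma> q x x'] Arr(4) by blast
  qed
  have f: "forallp (\<not> p) R1" "forallp p R2" using Arr(6) by auto
  show ?case
  proof (cases p)
    case True
    have "interp \<gamma> (Arr R1 R2) a a' \<longrightarrow> conv a a'"
    proof
      assume h: "interp \<gamma> (Arr R1 R2) a a'"
      have "\<And>x. conv (App a x) (App a' x)"
      proof -
        fix x
        have "interp \<gamma> R1 x x" using IH1[OF f(1)] True by simp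
        hence "interp \<gamma> R2 (App a x) (App a' x)" using h by simp
        thus "conv (App a x) (App a' x)" using IH2[OF f(2)] True by blast
      qed
      thus "conv a a'" by (rule conv_ext)
    qed
    thus ?thesis using True by blast
  next
    case False
    have cl: "be_closed (interp \<gamma> R2)" using interp_closed Arr by blast
    have "conv a a' \<longrightarrow> interp \<gamma> (Arr R1 R2) a a'"
    proof (intro impI)
      assume aa: "conv a a'"
      show "interp \<gamma> (Arr R1 R2) a a'" unfolding interp.simps
      proof (intro allI impI)
        fix x x' assume "interp \<gamma> R1 x x'"
        hence "conv x x'" using IH1[OF f(1)] False by blast
        hence "conv (App a x) (App a' x')" using aa conv_app by blast
        thus "interp \<gamma> R2 (App a x) (App a' x')" using IH2[OF f(2)] False by blast
      qed
    qed
    thus ?thesis using False by blast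
  qed
next
  case (All Y R)
  have p: p and f: "forallp True R" using All(5) by auto
  have "interp \<gamma> (All Y R) a a' \<longrightarrow> conv a a'"
  proof
    assume "interp \<gamma> (All Y R) a a'"
    hence ia: "interp (\<gamma>(Y:=conv)) R a a'" using be_closed_conv by simp
    have "\<forall>Z\<in>fv R. (\<gamma>(Y:=conv)) Z = conv" using All(4) by auto
    moreover have "\<forall>Z. be_closed ((\<gamma>(Y:=conv)) Z)" using All(3) be_closed_conv by simp
    moreover have "systemF R" using All(2) by simp
    ultimately have "(True \<longrightarrow> interp (\<gamma>(Y:=conv)) R a a' \<longrightarrow> conv a a')"
      using All(1)[of "\<gamma>(Y:=conv)" True a a'] f by blast
    thus "conv a a'" using ia by blast
  qed
  thus ?case using p by blast
qed simp_all


lemma fmap_id: "systemF R \<Longrightarrow> conv (App (fmapv P R) I_t) I_t"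
proof (induct R arbitrary: P)
  case (TVar Y) show ?case using conv_I conv_KI by simp
next
  case (Arr R1 R2)
  have s: "systemF R1" "systemF R2" using Arr(3) by auto
  have c1: "lvars 0 (fmapv P R1)" and c2: "lvars 0 (fmapv P R2)" using fmap_closed s by blast+
  have i1: "conv (App (fmapv P R1) I_t) I_t" and i2: "conv (App (fmapv P R2) I_t) I_t" using Arr(1)[OF s(1)] Arr(2)[OF s(2)] by blast+
  have "\<And>h. conv (App (App (fmapv P (Arr R1 R2)) I_t) h) (App I_t h)"
  proof -
    fix h
    have "\<And>x. conv (App (App (App (fmapv P (Arr R1 R2)) I_t) h) x) (App h x)"
    proof -
      fix x
      have A: "conv (App (App (App (fmapv P (Arr R1 R2)) I_t) h) x)
         (App (App (fmapv P R2) I_t) (App h (App (App (fmapv P R1) I_t) x)))"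
        using fmap_arr[OF c1 c2] by simp
      have "conv (App (App (fmapv P R1) I_t) x) x" using i1 conv_appL conv_I conv_trans by blast
      hence B: "conv (App h (App (App (fmapv P R1) I_t) x)) (App h x)" by (rule conv_appR)
      have C: "conv (App (App (fmapv P R2) I_t) (App h (App (App (fmapv P R1) I_t) x))) (App h (App (App (fmapv P R1) I_t) x))"
        using i2 conv_appL conv_I conv_trans by blast
      show "conv (App (App (App (fmapv P (Arr R1 R2)) I_t) h) x) (App h x)"
        using A B C conv_trans by blast
    qed
    hence "conv (App (App (fmapv P (Arr R1 R2)) I_t) h) h" by (rule conv_ext)
    thus "conv (App (App (fmapv P (Arr R1 R2)) I_t) h) (App I_t h)" using conv_I conv_sym conv_trans by blast
  qed
  thus ?case by (rule conv_ext)
next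
  case (All Y R)
  have s: "systemF R" using All(2) by auto
  have c: "lvars 0 (fmapv (P(Y:=False)) R)" using fmap_closed s by blast
  show ?case using fmap_all[OF c, of I_t] All(1)[OF s] by (simp add: conv_trans[of _ "App (fmapv (P(Y := False)) R) I_t"])
qed simp_all



lemma part1:
  assumes sF: "systemF R" and oc: "occ True X R" and cl: "\<forall>Y. be_closed (\<gamma> Y)"
    and D: "interp \<gamma> (Dind X R) t t'"
  shows "interp \<gamma> (Dparam X R) t t'"
  unfolding interp_Dparam
proof (intro allI impI)
  fix r f f'
  assume r: "be_closed r" and H: "\<forall>a a'. interp (\<gamma>(X:=r)) R a a' \<longrightarrow> r (App f a) (App f' a')"
  define r' where "r' = (\<lambda>u u'. r (App u f) (App u' f'))"
  have r'c: "be_closed r'" unfolding be_closed_def r'_def using bcD[OF r] conv_appL by blast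
  have rm: "relmap r' r (App fold_t f) (App fold_t f')" unfolding relmap_def r'_def
    using bcD[OF r] conv_fold by blast
  have FR: "relmap (interp (\<gamma>(X:=r')) R) (interp (\<gamma>(X:=r)) R) (App (fmap X R) (App fold_t f)) (App (fmap X R) (App fold_t f'))"
    using fmap_rel[of R "\<gamma>(X:=r')" "\<gamma>(X:=r)" X True True "App fold_t f" "App fold_t f'"] sF cl r r'c oc rm
    by (simp add: fmap_def)
  have "interp (\<gamma>(X:=r')) (Arr R (TVar X)) (in_t X R) (in_t X R)"
    unfolding interp.simps
  proof (intro allI impI)
    fix a a' assume "interp (\<gamma>(X:=r')) R a a'"
    hence "interp (\<gamma>(X:=r)) R (App (App (fmap X R) (App fold_t f)) a) (App (App (fmap X R) (App fold_t f')) a')"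
      using FR unfolding relmap_def by blast
    hence "r (App f (App (App (fmap X R) (App fold_t f)) a)) (App f' (App (App (fmap X R) (App fold_t f')) a'))"
      using H by blast
    hence "r (App (App (in_t X R) a) f) (App (App (in_t X R) a') f')"
      using bcD[OF r] conv_in[OF sF] by blast
    thus "(\<gamma>(X:=r')) X (App (in_t X R) a) (App (in_t X R) a')" by (simp add: r'_def)
  qed
  hence "r' t t'" using D interp_Dind[OF cl] r'c by blast
  thus "r (App t f) (App t' f')" by (simp add: r'_def)
qed

lemma partA:
  assumes sF: "systemF R" and fvR: "fv R = {X}" and fa: "forallp True R" and cl: "\<forall>Y. be_closed (\<gamma> Y)"
    and D: "interp \<gamma> (Dparam X R) u v"
  shows "conv u v"
proof (rule conv_ext)
  fix f
  have clc: "\<forall>Y. be_closed ((\<gamma>(X:=conv)) Y)" using cl be_closed_conv by simp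
  have fvc: "\<forall>Y\<in>fv R. (\<gamma>(X:=conv)) Y = conv" using fvR by simp
  have "\<forall>a a'. interp (\<gamma>(X:=conv)) R a a' \<longrightarrow> conv (App f a) (App f a')"
    using IE[OF sF clc fvc fa] conv_appR by blast
  thus "conv (App u f) (App v f)" using D be_closed_conv unfolding interp_Dparam by blast
qed

lemma partB:
  assumes sF: "systemF R" and fvR: "fv R = {X}" and oc: "occ True X R" and fa: "forallp True R"
    and cl: "\<forall>Y. be_closed (\<gamma> Y)"
    and D: "interp \<gamma> (Dparam X R) u v"
  shows "conv (App u (in_t X R)) v"
proof (rule conv_ext)
  fix f
  define G where "G = (\<lambda>x y. conv (App x f) y)"
  have Gc: "be_closed G" unfolding be_closed_def G_def by (meson conv_appL conv_sym conv_trans)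
  have clc: "\<forall>Y. be_closed ((\<gamma>(X:=conv)) Y)" using cl be_closed_conv by simp
  have fvc: "\<forall>Y\<in>fv R. (\<gamma>(X:=conv)) Y = conv" using fvR by simp
  have rm: "relmap G conv (App fold_t f) I_t" unfolding relmap_def G_def
    by (meson conv_I conv_fold conv_sym conv_trans)
  have FR: "relmap (interp (\<gamma>(X:=G)) R) (interp (\<gamma>(X:=conv)) R) (App (fmap X R) (App fold_t f)) (App (fmap X R) I_t)"
    using fmap_rel[of R "\<gamma>(X:=G)" "\<gamma>(X:=conv)" X True True "App fold_t f" I_t] sF cl Gc be_closed_conv oc rm
    by (simp add: fmap_def)
  have fid: "\<And>a'. conv (App (App (fmap X R) I_t) a') a'"
    using fmap_id[OF sF, of "\<lambda>Y. Y = X"] unfolding fmap_def by (meson conv_I conv_appL conv_trans)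
  have "\<forall>a a'. interp (\<gamma>(X:=G)) R a a' \<longrightarrow> G (App (in_t X R) a) (App f a')"
  proof (intro allI impI)
    fix a a' assume "interp (\<gamma>(X:=G)) R a a'"
    hence "interp (\<gamma>(X:=conv)) R (App (App (fmap X R) (App fold_t f)) a) (App (App (fmap X R) I_t) a')"
      using FR unfolding relmap_def by blast
    hence "conv (App (App (fmap X R) (App fold_t f)) a) (App (App (fmap X R) I_t) a')"
      using IE[OF sF clc fvc fa] by blast
    hence "conv (App (App (fmap X R) (App fold_t f)) a) a'" using fid conv_trans by blast
    hence "conv (App f (App (App (fmap X R) (App fold_t f)) a)) (App f a')" by (rule conv_appR)
    thus "G (App (in_t X R) a) (App f a')" unfolding G_def using conv_in[OF sF] conv_trans by blast
  qed
  hence "G (App u (in_t X R)) (App v f)" using D Gc unfolding interp_Dparam by blast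
  thus "conv (App (App u (in_t X R)) f) (App v f)" by (simp add: G_def)
qed

lemma part2:
  assumes sF: "systemF R" and fvR: "fv R = {X}" and oc: "occ True X R" and fa: "forallp True R"
    and cl: "\<forall>Y. be_closed (\<gamma> Y)"
    and D: "interp \<gamma> (Dparam X R) t t'"
  shows "interp \<gamma> (Dind X R) t t'"
proof -
  have tt: "conv t t'" using partA[OF sF fvR fa cl D] .
  have D': "interp \<gamma> (Dparam X R) t' t'"
    using bcD[OF interp_closed[OF cl] D] tt conv_sym conv_refl by blast
  have e1: "conv t (App t (in_t X R))" using partB[OF sF fvR oc fa cl D] tt conv_sym conv_trans by blast
  have e2: "conv t' (App t' (in_t X R))" using partB[OF sF fvR oc fa cl D'] conv_sym by blast
  show ?thesis unfolding interp_Dind[OF cl]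
  proof (intro allI impI)
    fix r assume r: "be_closed r" and hin: "interp (\<gamma>(X:=r)) (Arr R (TVar X)) (in_t X R) (in_t X R)"
    have "r (App t (in_t X R)) (App t' (in_t X R))" using D r hin unfolding interp_Dparam interp.simps fun_upd_same by blast
    thus "r t t'" using bcD[OF r] e1 e2 by blast
  qed
qed

theorem mainTheorem2:
  fixes R :: rtype and X :: tyvar and \<gamma> :: "tyvar \<Rightarrow> dB \<Rightarrow> dB \<Rightarrow> bool"
  assumes "systemF R" and "fv R = {X}" and "occ True X R"
    and "\<forall>Y. be_closed (\<gamma> Y)"
  shows "(\<forall>t t'. interp \<gamma> (Sub (Dind X R) (Dparam X R)) t t')
       \<and> (forallp True R \<longrightarrow> (\<forall>t t'. interp \<gamma> (Sub (Dparam X R) (Dind X R)) t t'))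
       \<and> (forallp True R \<longrightarrow> (\<forall>t t'. interp \<gamma> (Simeq (Dind X R) (Dparam X R)) t t'))"
proof -
  have A: "\<forall>t t'. interp \<gamma> (Sub (Dind X R) (Dparam X R)) t t'"
    using interp_Sub[OF assms(4)] part1[OF assms(1) assms(3) assms(4)] by blast
  have B: "forallp True R \<longrightarrow> (\<forall>t t'. interp \<gamma> (Sub (Dparam X R) (Dind X R)) t t')"
    using interp_Sub[OF assms(4)] part2[OF assms(1) assms(2) assms(3) _ assms(4)] by blast
  have C: "forallp True R \<longrightarrow> (\<forall>t t'. interp \<gamma> (Simeq (Dind X R) (Dparam X R)) t t')"
    using A B unfolding Simeq_def interp.simps by blast
  show ?thesis using A B C by blast
qed


end
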